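(* There is an absolute constant $C$ such that the following holds. Let $v\in\mathbb{S}^{n-1}$ be fixed and let $\mathbf{u}$ be uniform on $\mathbb{S}^{n-1}$. Let $0<\epsilon<1$ and $\frac1{\sqrt n}<\alpha\le\beta\le\frac12$ with $\beta=(1+\epsilon)\alpha$, and suppose $n\alpha^2\epsilon\le\frac{1}{8e^2}$. Then \[ 1\le\frac{\Pr[|\langle v,\mathbf{u}\rangle|\ge\alpha]}{\Pr[|\langle v,\mathbf{u}\rangle|\ge\beta]}\le 1+C\,n\alpha^2\epsilon . \]
   Context: $\mathbb{S}^{n-1}$ is the unit sphere in $\mathbb{R}^n$ with its uniform (normalized surface) measure. *)

theory Defs
  imports "HOL-Analysis.Analysis"
begin

text \<open>Euclidean space R^n modelled as functions nat => real on the index set {..<n},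
  with Lebesgue measure the product measure PiM {..<n} (\<lambda>_. lborel).
  (Explicit n is needed so that the constant C can be chosen independently of n.)\<close>

definition sph_inner :: "nat \<Rightarrow> (nat \<Rightarrow> real) \<Rightarrow> (nat \<Rightarrow> real) \<Rightarrow> real" where
  "sph_inner n x y = (\<Sum>i<n. x i * y i)"

definition sph_norm :: "nat \<Rightarrow> (nat \<Rightarrow> real) \<Rightarrow> real" where
  "sph_norm n x = sqrt (sph_inner n x x)"

definition lebesgue_Rn :: "nat \<Rightarrow> (nat \<Rightarrow> real) measure" where
  "lebesgue_Rn n = PiM {..<n} (\<lambda>_. lborel)"

definition unit_ball_Rn :: "nat \<Rightarrow> (nat \<Rightarrow> real) set" where
  "unit_ball_Rn n = {x \<in> space (lebesgue_Rn n). sph_norm n x \<le> 1}"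

text \<open>Uniform (normalized surface) measure on S^{n-1}: the push-forward of the uniform
  probability measure on the unit ball under radial projection x \<mapsto> x/|x|
  (the cone-measure description of normalized surface measure).\<close>

definition unif_sphere :: "nat \<Rightarrow> (nat \<Rightarrow> real) measure" where
  "unif_sphere n = distr (uniform_measure (lebesgue_Rn n) (unit_ball_Rn n)) (lebesgue_Rn n)
     (\<lambda>x. restrict (\<lambda>i. x i / sph_norm n x) {..<n})"

definition sphere_tail :: "nat \<Rightarrow> (nat \<Rightarrow> real) \<Rightarrow> real \<Rightarrow> real" where
  "sphere_tail n v t = measure (unif_sphere n) {u \<in> space (unif_sphere n). \<bar>sph_inner n v u\<bar> \<ge> t}"

end

theory Submission imports Defs begin

abbreviation "LB I \<equiv> PiM I (\<lambda>_::nat. (lborel::real measure))"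

lemma measurable_upd:
  assumes "i \<in> I" and h[measurable]: "h \<in> borel_measurable (LB I)"
  shows "(\<lambda>x. x(i := h x)) \<in> LB I \<rightarrow>\<^sub>M LB I"
proof -
  have "(\<lambda>x k. (x(i := h x)) k) \<in> LB I \<rightarrow>\<^sub>M LB I"
  proof (rule measurable_PiM_single')
    fix k assume k: "k \<in> I"
    show "(\<lambda>x. (x(i := h x)) k) \<in> LB I \<rightarrow>\<^sub>M lborel"
    proof (cases "k = i")
      case True then show ?thesis by simp
    next
      case False then show ?thesis using k by simp
    qed
  next
    show "(\<lambda>x k. (x(i := h x)) k) \<in> space (LB I) \<rightarrow> (\<Pi>\<^sub>E k\<in>I. space lborel)"
      using assms(1) by (auto simp: space_PiM PiE_def extensional_def)
  qed
  then show ?thesis by (simp add: fun_upd_def)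
qed

lemma affine_coord:
  assumes I: "finite I" "i \<in> I" and c: "c \<noteq> 0"
    and g[measurable]: "g \<in> borel_measurable (LB I)" and gi: "\<And>x y. g (x(i:=y)) = g x"
    and S[measurable]: "S \<in> sets (LB I)"
  shows "emeasure (LB I) {x \<in> space (LB I). x(i := c * x i + g x) \<in> S}
       = ennreal (1/\<bar>c\<bar>) * emeasure (LB I) S"
proof -
  interpret product_sigma_finite "\<lambda>_::nat. (lborel::real measure)" by standard
  define J where "J = I - {i}"
  have IJ: "I = insert i J" "i \<notin> J" "finite J" using I by (auto simp: J_def)
  have fm: "(\<lambda>x. x(i := c * x i + g x)) \<in> LB I \<rightarrow>\<^sub>M LB I"
    by (rule measurable_upd[OF I(2)]) (use I(2) in simp)
  have meas: "{x \<in> space (LB I). x(i := c * x i + g x) \<in> S} \<in> sets (LB I)"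
    using measurable_sets[OF fm S] by (simp add: vimage_def Int_def conj_commute)
  have "emeasure (LB I) {x \<in> space (LB I). x(i := c * x i + g x) \<in> S}
     = (\<integral>\<^sup>+ z. indicator {x \<in> space (LB I). x(i := c * x i + g x) \<in> S} z \<partial>LB I)"
    using meas by simp
  also have "\<dots> = (\<integral>\<^sup>+ x. (\<integral>\<^sup>+ y. indicator {x \<in> space (LB I). x(i := c * x i + g x) \<in> S} (x(i:=y)) \<partial>lborel) \<partial>LB J)"
    unfolding IJ(1) by (rule product_nn_integral_insert) (use IJ meas in \<open>auto simp: IJ(1)[symmetric]\<close>)
  also have "\<dots> = (\<integral>\<^sup>+ x. (\<integral>\<^sup>+ y. indicator S (x(i:= g x + c * y)) \<partial>lborel) \<partial>LB J)"
  proof (intro nn_integral_cong)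
    fix x y assume x: "x \<in> space (LB J)"
    have "x(i:=y) \<in> space (LB I)" using x IJ by (auto simp: space_PiM PiE_def extensional_def)
    then show "indicator {x \<in> space (LB I). x(i := c * x i + g x) \<in> S} (x(i:=y)) = (indicator S (x(i:= g x + c * y)) :: ennreal)"
      using gi by (auto simp: indicator_def add.commute)
  qed
  also have "\<dots> = (\<integral>\<^sup>+ x. ennreal (1/\<bar>c\<bar>) * (\<integral>\<^sup>+ y. indicator S (x(i:= y)) \<partial>lborel) \<partial>LB J)"
  proof (intro nn_integral_cong)
    fix x assume x: "x \<in> space (LB J)"
    have m: "(\<lambda>y. indicator S (x(i:= y)) :: ennreal) \<in> borel_measurable borel"
    proof -
      have "(\<lambda>y. x(i:=y)) \<in> measurable lborel (LB I)"
        using measurable_component_update[OF x IJ(2)] IJ(1) by simp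
      then have "(\<lambda>y. x(i:=y)) \<in> measurable borel (LB I)" by simp
      then show ?thesis by measurable
    qed
    have "(\<integral>\<^sup>+ y. indicator S (x(i:= y)) \<partial>lborel) = ennreal \<bar>c\<bar> * (\<integral>\<^sup>+ y. indicator S (x(i:= g x + c * y)) \<partial>lborel)"
      by (rule nn_integral_real_affine[OF m c])
    then have "ennreal (1/\<bar>c\<bar>) * (\<integral>\<^sup>+ y. indicator S (x(i:= y)) \<partial>lborel) = ennreal (1/\<bar>c\<bar>) * ennreal \<bar>c\<bar> * (\<integral>\<^sup>+ y. indicator S (x(i:= g x + c * y)) \<partial>lborel)"
      by (simp add: mult.assoc)
    also have "\<dots> = (\<integral>\<^sup>+ y. indicator S (x(i:= g x + c * y)) \<partial>lborel)"
      using c by (simp add: ennreal_mult[symmetric])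
    finally show "(\<integral>\<^sup>+ y. indicator S (x(i:= g x + c * y)) \<partial>lborel) = ennreal (1/\<bar>c\<bar>) * (\<integral>\<^sup>+ y. indicator S (x(i:= y)) \<partial>lborel)" by simp
  qed
  also have "\<dots> = ennreal (1/\<bar>c\<bar>) * (\<integral>\<^sup>+ x. (\<integral>\<^sup>+ y. indicator S (x(i:= y)) \<partial>lborel) \<partial>LB J)"
  proof (rule nn_integral_cmult)
    have md: "(\<lambda>(x,y). x(i:=y)) \<in> LB J \<Otimes>\<^sub>M lborel \<rightarrow>\<^sub>M LB I"
      using measurable_add_dim[of i J "\<lambda>_. lborel"] IJ(1) by simp
    have "(\<lambda>p. indicator S ((\<lambda>(x,y). x(i:=y)) p) :: ennreal) \<in> borel_measurable (LB J \<Otimes>\<^sub>M lborel)"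
      by (rule measurable_compose[OF md]) simp
    then have "case_prod (\<lambda>x y. indicator S (x(i:=y)) :: ennreal) \<in> borel_measurable (LB J \<Otimes>\<^sub>M lborel)"
      by (simp add: case_prod_beta')
    then show "(\<lambda>x. \<integral>\<^sup>+ y. indicator S (x(i:= y)) \<partial>lborel) \<in> borel_measurable (LB J)"
      by (rule lborel.borel_measurable_nn_integral)
  qed
  also have "(\<integral>\<^sup>+ x. (\<integral>\<^sup>+ y. indicator S (x(i:= y)) \<partial>lborel) \<partial>LB J) = (\<integral>\<^sup>+ z. indicator S z \<partial>LB I)"
    unfolding IJ(1) by (rule product_nn_integral_insert[symmetric]) (use IJ in \<open>auto simp: IJ(1)[symmetric]\<close>)
  also have "\<dots> = emeasure (LB I) S" by simp
  finally show ?thesis .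
qed

definition mpf :: "nat set \<Rightarrow> ((nat \<Rightarrow> real) \<Rightarrow> (nat \<Rightarrow> real)) \<Rightarrow> real \<Rightarrow> bool" where
  "mpf I f k \<longleftrightarrow> k \<ge> 0 \<and> f \<in> LB I \<rightarrow>\<^sub>M LB I \<and>
     (\<forall>S\<in>sets (LB I). emeasure (LB I) {x \<in> space (LB I). f x \<in> S} = ennreal k * emeasure (LB I) S)"

lemma mpf_comp:
  assumes f: "mpf I f k1" and g: "mpf I g k2"
  shows "mpf I (\<lambda>x. g (f x)) (k1 * k2)"
proof -
  have fm: "f \<in> LB I \<rightarrow>\<^sub>M LB I" and gm: "g \<in> LB I \<rightarrow>\<^sub>M LB I" and k: "k1 \<ge> 0" "k2 \<ge> 0"
    using f g by (auto simp: mpf_def)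
  have "emeasure (LB I) {x \<in> space (LB I). g (f x) \<in> S} = ennreal (k1 * k2) * emeasure (LB I) S"
    if S: "S \<in> sets (LB I)" for S
  proof -
    have GS: "{y \<in> space (LB I). g y \<in> S} \<in> sets (LB I)"
      using measurable_sets[OF gm S] by (simp add: vimage_def Int_def conj_commute)
    have "{x \<in> space (LB I). g (f x) \<in> S} = {x \<in> space (LB I). f x \<in> {y \<in> space (LB I). g y \<in> S}}"
      using measurable_space[OF fm] by auto
    then have "emeasure (LB I) {x \<in> space (LB I). g (f x) \<in> S} = ennreal k1 * emeasure (LB I) {y \<in> space (LB I). g y \<in> S}"
    proof -
      have "emeasure (LB I) {x \<in> space (LB I). f x \<in> {y \<in> space (LB I). g y \<in> S}} = ennreal k1 * emeasure (LB I) {y \<in> space (LB I). g y \<in> S}"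
        using f GS unfolding mpf_def by blast
      then show ?thesis using \<open>{x \<in> space (LB I). g (f x) \<in> S} = _\<close> by simp
    qed
    also have "\<dots> = ennreal k1 * (ennreal k2 * emeasure (LB I) S)" using g S by (simp add: mpf_def)
    finally show ?thesis using k by (simp add: ennreal_mult mult.assoc)
  qed
  then show ?thesis using k fm gm by (auto simp: mpf_def)
qed

lemma mpf_affine:
  assumes I: "finite I" "i \<in> I" and c: "c \<noteq> 0"
    and g: "g \<in> borel_measurable (LB I)" and gi: "\<And>x y. g (x(i:=y)) = g x"
  shows "mpf I (\<lambda>x. x(i := c * x i + g x)) (1/\<bar>c\<bar>)"
proof -
  have fm: "(\<lambda>x. x(i := c * x i + g x)) \<in> LB I \<rightarrow>\<^sub>M LB I"
    by (rule measurable_upd[OF I(2)]) (use I(2) g in simp)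
  then show ?thesis using affine_coord[OF I c g gi] by (auto simp: mpf_def)
qed

lemma mpf_shear:
  assumes I: "finite I" "i \<in> I" "j \<in> I" "i \<noteq> j"
  shows "mpf I (\<lambda>x. x(i := x i + p * x j)) 1"
  using mpf_affine[OF I(1,2), of 1 "\<lambda>x. p * x j"] I by simp

definition scl :: "nat set \<Rightarrow> real \<Rightarrow> (nat \<Rightarrow> real) \<Rightarrow> (nat \<Rightarrow> real)" where
  "scl J c x = (\<lambda>k. if k \<in> J then c * x k else x k)"

lemma mpf_scl:
  assumes I: "finite I" "J \<subseteq> I" and c: "c \<noteq> 0"
  shows "mpf I (scl J c) ((1/\<bar>c\<bar>) ^ card J)"
proof -
  have "finite J" using I finite_subset by blast
  then show ?thesis using I(2)
  proof (induction J rule: finite_induct)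
    case empty
    have "scl {} c = (\<lambda>x. x)" by (auto simp: scl_def)
    moreover have "{x \<in> space (LB I). x \<in> S} = S" if "S \<in> sets (LB I)" for S
      using sets.sets_into_space[OF that] by auto
    ultimately show ?case by (auto simp: mpf_def)
  next
    case (insert j J)
    have "mpf I (\<lambda>x. x(j := c * x j + 0)) (1/\<bar>c\<bar>)"
      by (rule mpf_affine) (use insert I c in auto)
    from mpf_comp[OF insert.IH this] insert.prems
    have "mpf I (\<lambda>x. (scl J c x)(j := c * scl J c x j + 0)) ((1/\<bar>c\<bar>) ^ card J * (1/\<bar>c\<bar>))" by simp
    moreover have "(\<lambda>x. (scl J c x)(j := c * scl J c x j + 0)) = scl (insert j J) c"
      using insert by (auto simp: scl_def fun_eq_iff)
    ultimately show ?case using insert by (simp add: mult.commute)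
  qed
qed

definition giv :: "nat \<Rightarrow> real \<Rightarrow> real \<Rightarrow> (nat \<Rightarrow> real) \<Rightarrow> (nat \<Rightarrow> real)" where
  "giv j cc s x = x(0 := cc * x 0 + s * x j, j := - s * x 0 + cc * x j)"

lemma mpf_giv:
  assumes I: "finite I" "0 \<in> I" "j \<in> I" "j \<noteq> 0" and s: "s \<noteq> 0" and cs: "cc^2 + s^2 = 1"
  shows "mpf I (giv j cc s) 1"
proof -
  define p where "p = (1 - cc) / s"
  define q where "q = - s"
  have pq: "p * q = cc - 1" using s by (simp add: p_def q_def field_simps)
  have p1: "p * (1 + cc) = s" using s cs
    by (simp add: p_def field_simps power2_eq_square)
  have m1: "mpf I (\<lambda>x. x(0 := x 0 + p * x j)) 1" by (rule mpf_shear) (use I in auto)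
  have m2: "mpf I (\<lambda>x. x(j := x j + q * x 0)) 1" by (rule mpf_shear) (use I in auto)
  have "mpf I (\<lambda>x. (\<lambda>x. x(0 := x 0 + p * x j)) ((\<lambda>x. x(j := x j + q * x 0)) ((\<lambda>x. x(0 := x 0 + p * x j)) x))) 1"
    using mpf_comp[OF mpf_comp[OF m1 m2] m1] by simp
  moreover have "(\<lambda>x. (\<lambda>x. x(0 := x 0 + p * x j)) ((\<lambda>x. x(j := x j + q * x 0)) ((\<lambda>x. x(0 := x 0 + p * x j)) x))) = giv j cc s"
  proof (rule ext)+
    fix x k
    have e0: "x 0 + p * x j + p * (x j + q * (x 0 + p * x j)) = cc * x 0 + s * x j"
    proof -
      have "x 0 + p * x j + p * (x j + q * (x 0 + p * x j)) = (1 + p*q) * x 0 + (p * (1 + (1 + p * q))) * x j"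
        by (simp add: algebra_simps)
      also have "\<dots> = cc * x 0 + s * x j" using pq p1 by simp
      finally show ?thesis .
    qed
    have e1: "x j + q * (x 0 + p * x j) = - s * x 0 + cc * x j"
    proof -
      have "x j + q * (x 0 + p * x j) = q * x 0 + (1 + p * q) * x j" by (simp add: algebra_simps)
      then show ?thesis using pq by (simp add: q_def)
    qed
    show "((\<lambda>x. x(0 := x 0 + p * x j)) ((\<lambda>x. x(j := x j + q * x 0)) ((\<lambda>x. x(0 := x 0 + p * x j)) x))) k = giv j cc s x k"
      using I(4) e0 e1 by (auto simp: giv_def)
  qed
  ultimately show ?thesis by simp
qed

lemma sph_inner_meas[measurable]: "(\<lambda>x. sph_inner n v x) \<in> borel_measurable (LB {..<n})"
  unfolding sph_inner_def by measurable

lemma sph_norm_meas[measurable]: "(\<lambda>x. sph_norm n x) \<in> borel_measurable (LB {..<n})"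
  unfolding sph_norm_def sph_inner_def by measurable

definition Aset :: "nat \<Rightarrow> (nat \<Rightarrow> real) \<Rightarrow> real \<Rightarrow> (nat \<Rightarrow> real) set" where
  "Aset n v t = {x \<in> space (LB {..<n}). sph_norm n x \<le> 1 \<and> t \<le> \<bar>sph_inner n v x\<bar> / sph_norm n x}"

lemma Aset_sets[measurable]: "Aset n v t \<in> sets (LB {..<n})"
  unfolding Aset_def by measurable

lemma sum_two:
  assumes "finite I" "i \<in> I" "j \<in> I" "i \<noteq> j"
  shows "sum f I = f i + f j + sum f (I - {i, j})"
proof -
  have "sum f I = f i + sum f (I - {i})" using assms by (simp add: sum.remove)
  also have "sum f (I - {i}) = f j + sum f (I - {i} - {j})" using assms by (simp add: sum.remove)
  also have "I - {i} - {j} = I - {i, j}" by auto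
  finally show ?thesis by (simp add: add.assoc)
qed

lemma giv_inner:
  assumes "0 < j" "j < n" and cs: "cc^2 + s^2 = 1"
  shows "sph_inner n (giv j cc s x) (giv j cc s y) = sph_inner n x y"
proof -
  have n0: "0 \<in> {..<n}" "j \<in> {..<n}" using assms by auto
  have "sph_inner n (giv j cc s x) (giv j cc s y)
     = (cc * x 0 + s * x j) * (cc * y 0 + s * y j) + (- s * x 0 + cc * x j) * (- s * y 0 + cc * y j)
       + (\<Sum>k\<in>{..<n} - {0, j}. x k * y k)"
    unfolding sph_inner_def using assms
    by (subst sum_two[OF _ n0]) (auto simp: giv_def intro!: sum.cong)
  also have "(cc * x 0 + s * x j) * (cc * y 0 + s * y j) + (- s * x 0 + cc * x j) * (- s * y 0 + cc * y j)
      = (cc^2 + s^2) * (x 0 * y 0) + (cc^2 + s^2) * (x j * y j)"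
    by (simp add: algebra_simps power2_eq_square)
  also have "\<dots> = x 0 * y 0 + x j * y j" using cs by simp
  also have "x 0 * y 0 + x j * y j + (\<Sum>k\<in>{..<n} - {0, j}. x k * y k) = sph_inner n x y"
    unfolding sph_inner_def using sum_two[OF _ n0, of "\<lambda>k. x k * y k"] assms by simp
  finally show ?thesis .
qed


lemma Aset_giv:
  assumes "0 < j" "j < n" and s: "s \<noteq> 0" and cs: "cc^2 + s^2 = 1"
  shows "emeasure (LB {..<n}) (Aset n v t) = emeasure (LB {..<n}) (Aset n (giv j cc s v) t)"
proof -
  have m: "mpf {..<n} (giv j cc s) 1" by (rule mpf_giv) (use assms in auto)
  then have gm: "giv j cc s \<in> LB {..<n} \<rightarrow>\<^sub>M LB {..<n}" by (simp add: mpf_def)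
  have "Aset n v t = {x \<in> space (LB {..<n}). giv j cc s x \<in> Aset n (giv j cc s v) t}"
  proof -
    have "x \<in> Aset n v t \<longleftrightarrow> x \<in> space (LB {..<n}) \<and> giv j cc s x \<in> Aset n (giv j cc s v) t" for x
    proof -
      have n1: "sph_norm n (giv j cc s x) = sph_norm n x"
        unfolding sph_norm_def using giv_inner[OF assms(1,2) cs] by simp
      have n2: "sph_inner n (giv j cc s v) (giv j cc s x) = sph_inner n v x"
        using giv_inner[OF assms(1,2) cs] by simp
      have "x \<in> space (LB {..<n}) \<Longrightarrow> giv j cc s x \<in> space (LB {..<n})"
        using measurable_space[OF gm] by blast
      then show ?thesis unfolding Aset_def using n1 n2 by auto
    qed
    then show ?thesis by blast
  qed
  then show ?thesis using m by (simp add: mpf_def)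
qed


definition e0 :: "nat \<Rightarrow> real" where "e0 = (\<lambda>k. if k = 0 then 1 else 0)"

lemma inner_single:
  assumes "n \<ge> 1" "\<forall>k\<in>{1..<n}. v k = 0"
  shows "sph_inner n v x = v 0 * x 0"
proof -
  have "sph_inner n v x = v 0 * x 0 + (\<Sum>k\<in>{..<n} - {0}. v k * x k)"
    unfolding sph_inner_def using assms by (subst sum.remove[of _ 0]) auto
  also have "(\<Sum>k\<in>{..<n} - {0}. v k * x k) = 0" using assms by (intro sum.neutral) auto
  finally show ?thesis by simp
qed

lemma Aset_reduce_aux:
  assumes "n \<ge> 1"
  shows "\<forall>v. card {k\<in>{1..<n}. v k \<noteq> 0} = N \<longrightarrow> sph_inner n v v = 1 \<longrightarrow>
    emeasure (LB {..<n}) (Aset n v t) = emeasure (LB {..<n}) (Aset n e0 t)"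
proof (induction N)
  case 0
  show ?case
  proof (intro allI impI)
    fix v :: "nat \<Rightarrow> real" assume c: "card {k\<in>{1..<n}. v k \<noteq> 0} = 0" and v: "sph_inner n v v = 1"
    have fin: "finite {k\<in>{1..<n}. v k \<noteq> 0}" by simp
    have "{k\<in>{1..<n}. v k \<noteq> 0} = {}" using c card_0_eq[OF fin] by blast
    then have z: "\<forall>k\<in>{1..<n}. v k = 0" by blast
    have z0: "\<forall>k\<in>{1..<n}. e0 k = 0" by (auto simp: e0_def)
    have iv: "sph_inner n v x = v 0 * x 0" for x by (rule inner_single[OF assms z])
    have ie: "sph_inner n e0 x = x 0" for x using inner_single[OF assms z0, of x] by (simp add: e0_def)
    have "v 0 ^ 2 = 1" using v iv[of v] by (simp add: power2_eq_square)
    then have "v 0 = 1 \<or> v 0 = -1" by (simp add: power2_eq_1_iff)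
    then have "\<bar>sph_inner n v x\<bar> = \<bar>sph_inner n e0 x\<bar>" for x
      unfolding iv ie by auto
    then have "Aset n v t = Aset n e0 t" unfolding Aset_def by presburger
    then show "emeasure (LB {..<n}) (Aset n v t) = emeasure (LB {..<n}) (Aset n e0 t)" by simp
  qed
next
  case (Suc N)
  show ?case
  proof (intro allI impI)
    fix v :: "nat \<Rightarrow> real" assume c: "card {k\<in>{1..<n}. v k \<noteq> 0} = Suc N" and v: "sph_inner n v v = 1"
    have "{k\<in>{1..<n}. v k \<noteq> 0} \<noteq> {}"
    proof
      assume "{k\<in>{1..<n}. v k \<noteq> 0} = {}"
      then have "card {k\<in>{1..<n}. v k \<noteq> 0} = 0" by (simp only: card.empty)
      then show False using c by (metis Suc_neq_Zero)
    qed
    then obtain j where j: "j \<in> {k\<in>{1..<n}. v k \<noteq> 0}" by blast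
    define r where "r = sqrt (v 0 ^ 2 + v j ^ 2)"
    have vj: "v j \<noteq> 0" using j by simp
    have "v j ^ 2 > 0" using vj by simp
    then have rpos: "r > 0" unfolding r_def by (intro real_sqrt_gt_zero) (simp add: add_nonneg_pos)
    define cc where "cc = v 0 / r"
    define s where "s = v j / r"
    have s0: "s \<noteq> 0" using vj rpos by (simp add: s_def)
    have r2: "r^2 = v 0 ^ 2 + v j ^ 2" unfolding r_def by (simp add: add_nonneg_nonneg)
    have cs: "cc^2 + s^2 = 1"
    proof -
      have "cc^2 + s^2 = (v 0 ^ 2 + v j ^ 2) / r^2" by (simp add: cc_def s_def power_divide add_divide_distrib)
      then show ?thesis using r2 rpos vj by simp
    qed
    define w where "w = giv j cc s v"
    have j0: "0 < j" "j < n" using j by auto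
    have wj: "w j = 0" using j0 unfolding w_def giv_def cc_def s_def by simp
    have wk: "w k = v k" if "k \<noteq> 0" "k \<noteq> j" for k using that by (simp add: w_def giv_def)
    have "{k\<in>{1..<n}. w k \<noteq> 0} = {k\<in>{1..<n}. v k \<noteq> 0} - {j}"
    proof (intro set_eqI iffI)
      fix k assume "k \<in> {k\<in>{1..<n}. w k \<noteq> 0}"
      then show "k \<in> {k\<in>{1..<n}. v k \<noteq> 0} - {j}" using wj wk[of k] by (cases "k = j") auto
    next
      fix k assume "k \<in> {k\<in>{1..<n}. v k \<noteq> 0} - {j}"
      then show "k \<in> {k\<in>{1..<n}. w k \<noteq> 0}" using wk[of k] by auto
    qed
    moreover have "finite {k\<in>{1..<n}. v k \<noteq> 0}" by simp
    ultimately have cw: "card {k\<in>{1..<n}. w k \<noteq> 0} = N" using c j by (simp add: card_Diff_singleton)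
    have ww: "sph_inner n w w = 1" using giv_inner[OF j0 cs] v by (simp add: w_def)
    have "emeasure (LB {..<n}) (Aset n v t) = emeasure (LB {..<n}) (Aset n w t)"
      unfolding w_def by (rule Aset_giv[OF j0 s0 cs])
    also have "\<dots> = emeasure (LB {..<n}) (Aset n e0 t)" using Suc.IH cw ww by blast
    finally show "emeasure (LB {..<n}) (Aset n v t) = emeasure (LB {..<n}) (Aset n e0 t)" .
  qed
qed

lemma Aset_reduce:
  assumes "n \<ge> 1" "sph_inner n v v = 1"
  shows "emeasure (LB {..<n}) (Aset n v t) = emeasure (LB {..<n}) (Aset n e0 t)"
  using Aset_reduce_aux[OF assms(1)] assms(2) by blast

definition Qs :: "nat \<Rightarrow> (nat \<Rightarrow> real) \<Rightarrow> real" where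
  "Qs n x = (\<Sum>i\<in>{1..<n}. (x i)^2)"

lemma Qs_meas[measurable]: "Qs n \<in> borel_measurable (LB {..<n})"
  unfolding Qs_def by measurable

lemma Qs_nonneg: "Qs n x \<ge> 0" unfolding Qs_def by (simp add: sum_nonneg)

definition Dset :: "nat \<Rightarrow> real \<Rightarrow> real \<Rightarrow> real \<Rightarrow> (nat \<Rightarrow> real) set" where
  "Dset n a b r = {x \<in> space (LB {..<n}). a \<le> x 0 \<and> x 0 \<le> b \<and> sqrt (Qs n x) \<le> r}"

lemma comp0_meas: "n \<ge> 1 \<Longrightarrow> (\<lambda>x. x 0) \<in> borel_measurable (LB {..<n})"
proof -
  assume "n \<ge> 1"
  then have "(\<lambda>x. x 0) \<in> measurable (LB {..<n}) lborel"
    by (intro measurable_component_singleton) simp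
  then show ?thesis by simp
qed

lemma Dset_sets: "n \<ge> 1 \<Longrightarrow> Dset n a b r \<in> sets (LB {..<n})"
  unfolding Dset_def using comp0_meas[of n] by measurable

lemma lessThan_insert0: "(n::nat) \<ge> 1 \<Longrightarrow> {..<n} = insert 0 {1..<n}"
proof -
  assume n: "n \<ge> 1"
  show "{..<n} = insert 0 {1..<n}"
  proof (rule set_eqI)
    fix x :: nat show "x \<in> {..<n} \<longleftrightarrow> x \<in> insert 0 {1..<n}"
      using n by (cases x) auto
  qed
qed

lemma emeasure_Dset:
  assumes n: "n \<ge> 1" and ab: "a \<le> b" and r: "r > 0"
  shows "emeasure (LB {..<n}) (Dset n a b r) = ennreal ((b - a) * unit_ball_vol (real (n - 1)) * r ^ (n - 1))"
proof -
  interpret product_sigma_finite "\<lambda>_::nat. (lborel::real measure)" by standard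
  define R where "R = {1..<n}"
  have IR: "{..<n} = insert 0 R" "0 \<notin> R" "finite R" using n lessThan_insert0[OF n] by (auto simp: R_def)
  note Dset_sets[OF n, measurable]
  define Ball where "Ball = {f. sqrt (\<Sum>i\<in>R. (f i)\<^sup>2) \<le> r} \<inter> space (LB R)"
  have Ball_sets[measurable]: "Ball \<in> sets (LB R)" unfolding Ball_def
  proof -
    have "{f. sqrt (\<Sum>i\<in>R. (f i)\<^sup>2) \<le> r} \<inter> space (LB R) = {f \<in> space (LB R). sqrt (\<Sum>i\<in>R. (f i)\<^sup>2) \<le> r}" by auto
    also have "\<dots> \<in> sets (LB R)" by measurable
    finally show "{f. sqrt (\<Sum>i\<in>R. (f i)\<^sup>2) \<le> r} \<inter> space (LB R) \<in> sets (LB R)" .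
  qed
  have "emeasure (LB {..<n}) (Dset n a b r) = (\<integral>\<^sup>+ z. indicator (Dset n a b r) z \<partial>LB {..<n})"
    by simp
  also have "\<dots> = (\<integral>\<^sup>+ x. (\<integral>\<^sup>+ y. indicator (Dset n a b r) (x(0:=y)) \<partial>lborel) \<partial>LB R)"
    unfolding IR(1) by (rule product_nn_integral_insert) (use IR in \<open>auto simp: IR(1)[symmetric]\<close>)
  also have "\<dots> = (\<integral>\<^sup>+ x. indicator Ball x * (\<integral>\<^sup>+ y. indicator {a..b} y \<partial>lborel) \<partial>LB R)"
  proof (intro nn_integral_cong)
    fix x assume x: "x \<in> space (LB R)"
    have sp: "x(0:=y) \<in> space (LB {..<n})" for y using x IR by (auto simp: space_PiM PiE_def extensional_def)
    have q: "Qs n (x(0:=y)) = (\<Sum>i\<in>R. (x i)\<^sup>2)" for y unfolding Qs_def R_def by (intro sum.cong) auto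
    have "indicator (Dset n a b r) (x(0:=y)) = indicator Ball x * (indicator {a..b} y :: ennreal)" for y
      using sp q x by (auto simp: Dset_def Ball_def indicator_def)
    then have "(\<integral>\<^sup>+ y. indicator (Dset n a b r) (x(0:=y)) \<partial>lborel) = (\<integral>\<^sup>+ y. indicator Ball x * (indicator {a..b} y :: ennreal) \<partial>lborel)"
      by simp
    also have "\<dots> = indicator Ball x * (\<integral>\<^sup>+ y. indicator {a..b} y \<partial>lborel)"
      by (rule nn_integral_cmult) simp
    finally show "(\<integral>\<^sup>+ y. indicator (Dset n a b r) (x(0:=y)) \<partial>lborel) = indicator Ball x * (\<integral>\<^sup>+ y. indicator {a..b} y \<partial>lborel)" .
  qed
  also have "\<dots> = (\<integral>\<^sup>+ x. indicator Ball x \<partial>LB R) * ennreal (b - a)"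
    using ab by (subst nn_integral_multc) auto
  also have "(\<integral>\<^sup>+ x. indicator Ball x \<partial>LB R) = ennreal (unit_ball_vol (real (card R)) * r ^ card R)"
    using emeasure_cball_aux[OF IR(3) r] by (simp add: Ball_def)
  also have "card R = n - 1" by (simp add: R_def)
  finally show ?thesis using ab r by (simp add: ennreal_mult'[symmetric] mult_ac)
qed

definition Fc :: "nat \<Rightarrow> real \<Rightarrow> real \<Rightarrow> (nat \<Rightarrow> real) set" where
  "Fc n \<kappa> h = {x \<in> space (LB {..<n}). 0 < \<bar>x 0\<bar> \<and> \<bar>x 0\<bar> < h \<and> sqrt (Qs n x) \<le> \<kappa> * \<bar>x 0\<bar>}"

lemma Fc_sets: assumes "n \<ge> 1" shows "Fc n \<kappa> h \<in> sets (LB {..<n})"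
proof -
  note comp0_meas[OF assms, measurable]
  have [measurable]: "(\<lambda>x. \<kappa> * \<bar>x 0\<bar>) \<in> borel_measurable (LB {..<n})" by measurable
  have [measurable]: "(\<lambda>x. sqrt (Qs n x)) \<in> borel_measurable (LB {..<n})" by measurable
  have "(\<lambda>x. \<kappa> * \<bar>x 0\<bar> - sqrt (Qs n x)) \<in> borel_measurable (LB {..<n})" by measurable
  then have "{x \<in> space (LB {..<n}). 0 \<le> \<kappa> * \<bar>x 0\<bar> - sqrt (Qs n x)} \<in> sets (LB {..<n})" by measurable
  moreover have "{x \<in> space (LB {..<n}). 0 < \<bar>x 0\<bar> \<and> \<bar>x 0\<bar> < h} \<in> sets (LB {..<n})" by measurable
  ultimately have "{x \<in> space (LB {..<n}). 0 < \<bar>x 0\<bar> \<and> \<bar>x 0\<bar> < h} \<inter> {x \<in> space (LB {..<n}). 0 \<le> \<kappa> * \<bar>x 0\<bar> - sqrt (Qs n x)} \<in> sets (LB {..<n})"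
    by blast
  moreover have "Fc n \<kappa> h = {x \<in> space (LB {..<n}). 0 < \<bar>x 0\<bar> \<and> \<bar>x 0\<bar> < h} \<inter> {x \<in> space (LB {..<n}). 0 \<le> \<kappa> * \<bar>x 0\<bar> - sqrt (Qs n x)}"
    unfolding Fc_def by auto
  ultimately show ?thesis by simp
qed

lemma Qs_scl:
  assumes "J \<subseteq> {..<n}" "{1..<n} \<subseteq> J"
  shows "Qs n (scl J c x) = c^2 * Qs n x"
  unfolding Qs_def scl_def using assms
  by (simp add: sum_distrib_left power_mult_distrib subset_iff)

lemma Fc_full_scale:
  assumes n: "n \<ge> 1" and q: "q > 0"
  shows "emeasure (LB {..<n}) (Fc n \<kappa> (q*h)) = ennreal (q^n) * emeasure (LB {..<n}) (Fc n \<kappa> h)"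
proof -
  have m: "mpf {..<n} (scl {..<n} (1/q)) ((1/\<bar>1/q\<bar>) ^ card {..<n})"
    by (rule mpf_scl) (use q in auto)
  then have sm: "scl {..<n} (1/q) \<in> LB {..<n} \<rightarrow>\<^sub>M LB {..<n}" by (simp add: mpf_def)
  have "x \<in> Fc n \<kappa> (q*h) \<longleftrightarrow> x \<in> space (LB {..<n}) \<and> scl {..<n} (1/q) x \<in> Fc n \<kappa> h" for x
  proof -
    have 0: "scl {..<n} (1/q) x 0 = x 0 / q" using n by (simp add: scl_def)
    have "Qs n (scl {..<n} (1/q) x) = (1/q)^2 * Qs n x" by (rule Qs_scl) auto
    then have Q: "sqrt (Qs n (scl {..<n} (1/q) x)) = sqrt (Qs n x) / q"
      using q by (simp add: real_sqrt_mult power_divide real_sqrt_divide)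
    have sp: "x \<in> space (LB {..<n}) \<Longrightarrow> scl {..<n} (1/q) x \<in> space (LB {..<n})"
      using measurable_space[OF sm] by blast
    have e1: "\<bar>x 0 / q\<bar> < h \<longleftrightarrow> \<bar>x 0\<bar> < q * h" using q by (simp add: abs_div divide_less_eq mult.commute)
    have e2: "sqrt (Qs n x) / q \<le> \<kappa> * \<bar>x 0 / q\<bar> \<longleftrightarrow> sqrt (Qs n x) \<le> \<kappa> * \<bar>x 0\<bar>"
      using q by (simp add: abs_div divide_le_eq)
    show ?thesis unfolding Fc_def using 0 Q sp e1 e2 q by auto
  qed
  then have "Fc n \<kappa> (q*h) = {x \<in> space (LB {..<n}). scl {..<n} (1/q) x \<in> Fc n \<kappa> h}" by blast
  then show ?thesis using m Fc_sets[OF n] q by (simp add: mpf_def)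
qed

lemma Fc_rest_scale:
  assumes n: "n \<ge> 1" and s: "\<sigma> > 0"
  shows "emeasure (LB {..<n}) (Fc n (\<kappa>/\<sigma>) h) = ennreal ((1/\<sigma>)^(n-1)) * emeasure (LB {..<n}) (Fc n \<kappa> h)"
proof -
  have m: "mpf {..<n} (scl {1..<n} \<sigma>) ((1/\<bar>\<sigma>\<bar>) ^ card {1..<n})"
    by (rule mpf_scl) (use s in auto)
  then have sm: "scl {1..<n} \<sigma> \<in> LB {..<n} \<rightarrow>\<^sub>M LB {..<n}" by (simp add: mpf_def)
  have "x \<in> Fc n (\<kappa>/\<sigma>) h \<longleftrightarrow> x \<in> space (LB {..<n}) \<and> scl {1..<n} \<sigma> x \<in> Fc n \<kappa> h" for x
  proof -
    have 0: "scl {1..<n} \<sigma> x 0 = x 0" by (simp add: scl_def)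
    have "Qs n (scl {1..<n} \<sigma> x) = \<sigma>^2 * Qs n x" by (rule Qs_scl) auto
    then have Q: "sqrt (Qs n (scl {1..<n} \<sigma> x)) = \<sigma> * sqrt (Qs n x)"
      using s by (simp add: real_sqrt_mult)
    have sp: "x \<in> space (LB {..<n}) \<Longrightarrow> scl {1..<n} \<sigma> x \<in> space (LB {..<n})"
      using measurable_space[OF sm] by blast
    have e2: "\<sigma> * sqrt (Qs n x) \<le> \<kappa> * \<bar>x 0\<bar> \<longleftrightarrow> sqrt (Qs n x) \<le> \<kappa> / \<sigma> * \<bar>x 0\<bar>"
      using s by (simp add: field_simps)
    show ?thesis unfolding Fc_def using 0 Q sp e2 by auto
  qed
  then have "Fc n (\<kappa>/\<sigma>) h = {x \<in> space (LB {..<n}). scl {1..<n} \<sigma> x \<in> Fc n \<kappa> h}" by blast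
  then show ?thesis using m Fc_sets[OF n] s by (simp add: mpf_def)
qed

lemma cone_iff:
  assumes t: "0 < t" "t < 1" and X: "0 \<le> X" and Q: "0 \<le> Q"
  shows "(t * sqrt (X^2 + Q) \<le> X) \<longleftrightarrow> (sqrt Q \<le> sqrt (1 - t^2) / t * X)"
proof -
  have t2: "t^2 < 1" using t by (simp add: power_less_one_iff)
  have "t * sqrt (X^2 + Q) \<le> X \<longleftrightarrow> sqrt (X^2 + Q) \<le> X / t" using t by (simp add: field_simps)
  also have "\<dots> \<longleftrightarrow> X^2 + Q \<le> (X / t)^2" using X Q t by (intro real_sqrt_le_iff') auto
  also have "\<dots> \<longleftrightarrow> t^2 * (X^2 + Q) \<le> X^2" using t by (simp add: power_divide field_simps)
  also have "\<dots> \<longleftrightarrow> Q \<le> (1 - t^2) * X^2 / t^2" using t by (simp add: field_simps)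
  also have "\<dots> \<longleftrightarrow> Q \<le> (sqrt (1 - t^2) / t * X)^2"
    using t2 by (simp add: power_mult_distrib power_divide)
  also have "\<dots> \<longleftrightarrow> sqrt Q \<le> sqrt (1 - t^2) / t * X"
    using X Q t t2 by (intro real_sqrt_le_iff'[symmetric]) auto
  finally show ?thesis .
qed

lemma norm_split:
  assumes "n \<ge> 1" shows "sph_norm n x = sqrt ((x 0)^2 + Qs n x)"
proof -
  have "sph_inner n x x = x 0 * x 0 + (\<Sum>k\<in>{1..<n}. x k * x k)"
    unfolding sph_inner_def using lessThan_insert0[OF assms] by simp
  then show ?thesis unfolding sph_norm_def Qs_def by (simp add: power2_eq_square)
qed

lemma inner_e0: "n \<ge> 1 \<Longrightarrow> sph_inner n e0 x = x 0"
  using inner_single[of n e0 x] by (simp add: e0_def)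

lemma Aset_e0_iff:
  assumes n: "n \<ge> 1" and t: "0 < t"
  shows "x \<in> Aset n e0 t \<longleftrightarrow> x \<in> space (LB {..<n}) \<and> sqrt ((x 0)^2 + Qs n x) \<le> 1 \<and> 0 < \<bar>x 0\<bar> \<and>
      t * sqrt (\<bar>x 0\<bar>^2 + Qs n x) \<le> \<bar>x 0\<bar>"
proof -
  define N where "N = sqrt ((x 0)^2 + Qs n x)"
  have N0: "N \<ge> 0" unfolding N_def using Qs_nonneg[of n x] by simp
  have XN: "\<bar>x 0\<bar> \<le> N" unfolding N_def using Qs_nonneg[of n x]
    using real_sqrt_le_mono[of "(x 0)^2" "(x 0)^2 + Qs n x"] by simp
  have "t \<le> \<bar>x 0\<bar> / N \<longleftrightarrow> 0 < \<bar>x 0\<bar> \<and> t * N \<le> \<bar>x 0\<bar>"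
  proof (cases "N = 0")
    case True then show ?thesis using t XN by auto
  next
    case False then have "N > 0" using N0 by simp
    then show ?thesis using t by (auto simp: field_simps intro: mult_pos_pos) (smt (verit, best) mult_pos_pos)
  qed
  then show ?thesis unfolding Aset_def using norm_split[OF n] inner_e0[OF n]
    by (simp add: N_def)
qed

definition kap :: "real \<Rightarrow> real" where "kap t = sqrt (1 - t^2) / t"

lemma incl1:
  assumes n: "n \<ge> 1" and ab: "0 < \<alpha>" "\<alpha> \<le> \<beta>" "\<beta> < 1"
  shows "Aset n e0 \<alpha> - Aset n e0 \<beta> \<subseteq> (Fc n (kap \<alpha>) \<alpha> - Fc n (kap \<beta>) \<alpha>) \<union>
     Dset n \<alpha> \<beta> (sqrt (1 - \<alpha>^2)) \<union> Dset n (-\<beta>) (-\<alpha>) (sqrt (1 - \<alpha>^2))"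
proof
  fix x assume x: "x \<in> Aset n e0 \<alpha> - Aset n e0 \<beta>"
  define X where "X = \<bar>x 0\<bar>"
  define Q where "Q = Qs n x"
  define N where "N = sqrt (X^2 + Q)"
  have Q0: "Q \<ge> 0" using Qs_nonneg by (simp add: Q_def)
  have X0: "X \<ge> 0" by (simp add: X_def)
  have b0: "0 < \<beta>" using ab by simp
  have A: "x \<in> space (LB {..<n})" "N \<le> 1" "0 < X" "\<alpha> * N \<le> X"
    using x Aset_e0_iff[OF n ab(1), of x] by (auto simp: X_def Q_def N_def)
  have nB: "\<not> \<beta> * N \<le> X"
    using x Aset_e0_iff[OF n b0, of x] A by (auto simp: X_def Q_def N_def)
  have XB: "X < \<beta>" using nB A(2) b0 by (smt (verit) mult_left_le)
  have N2: "X^2 + Q \<le> 1" using A(2) unfolding N_def by simp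
  show "x \<in> (Fc n (kap \<alpha>) \<alpha> - Fc n (kap \<beta>) \<alpha>) \<union>
     Dset n \<alpha> \<beta> (sqrt (1 - \<alpha>^2)) \<union> Dset n (-\<beta>) (-\<alpha>) (sqrt (1 - \<alpha>^2))"
  proof (cases "X < \<alpha>")
    case True
    have "sqrt Q \<le> kap \<alpha> * X" using cone_iff[OF ab(1) _ X0 Q0] A(4) ab by (simp add: kap_def N_def)
    then have inA: "x \<in> Fc n (kap \<alpha>) \<alpha>" using A True by (simp add: Fc_def X_def Q_def)
    have "x \<notin> Fc n (kap \<beta>) \<alpha>"
    proof
      assume "x \<in> Fc n (kap \<beta>) \<alpha>"
      then have "sqrt Q \<le> kap \<beta> * X" by (simp add: Fc_def X_def Q_def)
      then have "\<beta> * N \<le> X" using cone_iff[OF b0 ab(3) X0 Q0] by (simp add: kap_def N_def)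
      then show False using nB by simp
    qed
    then show ?thesis using inA by blast
  next
    case False
    have "Q \<le> 1 - \<alpha>^2"
    proof -
      have "\<alpha>^2 \<le> X^2" using False ab by (simp add: power_mono)
      then show ?thesis using N2 by simp
    qed
    then have sq: "sqrt Q \<le> sqrt (1 - \<alpha>^2)" by simp
    show ?thesis
    proof (cases "x 0 \<ge> 0")
      case True
      then have "x \<in> Dset n \<alpha> \<beta> (sqrt (1 - \<alpha>^2))" using False XB sq A(1)
        by (simp add: Dset_def X_def Q_def)
      then show ?thesis by blast
    next
      case c: False
      then have "x \<in> Dset n (-\<beta>) (-\<alpha>) (sqrt (1 - \<alpha>^2))" using False XB sq A(1)
        by (simp add: Dset_def X_def Q_def)
      then show ?thesis by blast
    qed
  qed
qed

lemma kap_nonneg: "0 < t \<Longrightarrow> t < 1 \<Longrightarrow> kap t \<ge> 0"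
  unfolding kap_def by (simp add: abs_square_le_1)

lemma kap_mul: "0 < t \<Longrightarrow> kap t * t = sqrt (1 - t^2)"
  unfolding kap_def by simp

lemma kap_mono:
  assumes "0 < \<alpha>" "\<alpha> \<le> \<beta>" "\<beta> < 1"
  shows "kap \<beta> \<le> kap \<alpha>"
proof -
  have "\<alpha>^2 \<le> \<beta>^2" using assms by (simp add: power_mono)
  then have "sqrt (1 - \<beta>^2) \<le> sqrt (1 - \<alpha>^2)" by simp
  moreover have "\<beta>^2 < 1" using assms by (simp add: power_less_one_iff)
  moreover have "\<alpha>^2 \<le> 1" using \<open>\<alpha>^2 \<le> \<beta>^2\<close> \<open>\<beta>^2 < 1\<close> by linarith
  ultimately show ?thesis unfolding kap_def using assms
    by (intro frac_le) auto
qed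

lemma incl2:
  assumes n: "n \<ge> 1" and a: "0 < \<alpha>" "\<alpha> < 1" and q: "0 < q" "q < 1"
  shows "Fc n (kap \<alpha>) \<alpha> - Fc n (kap \<alpha>) (q * \<alpha>) \<subseteq>
     Dset n (q * \<alpha>) \<alpha> (sqrt (1 - \<alpha>^2)) \<union> Dset n (-\<alpha>) (-(q * \<alpha>)) (sqrt (1 - \<alpha>^2))"
proof
  fix x assume x: "x \<in> Fc n (kap \<alpha>) \<alpha> - Fc n (kap \<alpha>) (q * \<alpha>)"
  have A: "x \<in> space (LB {..<n})" "0 < \<bar>x 0\<bar>" "\<bar>x 0\<bar> < \<alpha>" "sqrt (Qs n x) \<le> kap \<alpha> * \<bar>x 0\<bar>"
    using x by (auto simp: Fc_def)
  have X: "\<bar>x 0\<bar> \<ge> q * \<alpha>" using x A by (auto simp: Fc_def)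
  have "kap \<alpha> * \<bar>x 0\<bar> \<le> kap \<alpha> * \<alpha>" using A(3) kap_nonneg[OF a] by (simp add: mult_left_mono)
  then have sq: "sqrt (Qs n x) \<le> sqrt (1 - \<alpha>^2)" using A(4) kap_mul[OF a(1)] by linarith
  show "x \<in> Dset n (q * \<alpha>) \<alpha> (sqrt (1 - \<alpha>^2)) \<union> Dset n (-\<alpha>) (-(q * \<alpha>)) (sqrt (1 - \<alpha>^2))"
    using A X sq by (cases "x 0 \<ge> 0") (auto simp: Dset_def)
qed

lemma incl3:
  assumes "0 < \<alpha>" "\<alpha> \<le> \<beta>" "\<beta> < 1"
  shows "Fc n (kap \<beta>) h \<subseteq> Fc n (kap \<alpha>) h"
  using kap_mono[OF assms] unfolding Fc_def
  by (auto intro: order_trans mult_right_mono)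

lemma incl5:
  assumes n: "n \<ge> 1" and b: "0 < \<beta>" "0 \<le> \<delta>" "\<beta> + \<delta> \<le> 1"
  shows "Dset n \<beta> (\<beta> + \<delta>) (sqrt (1 - (\<beta> + \<delta>)^2)) \<subseteq> Aset n e0 \<beta>"
proof
  fix x assume x: "x \<in> Dset n \<beta> (\<beta> + \<delta>) (sqrt (1 - (\<beta> + \<delta>)^2))"
  have A: "x \<in> space (LB {..<n})" "\<beta> \<le> x 0" "x 0 \<le> \<beta> + \<delta>" "sqrt (Qs n x) \<le> sqrt (1 - (\<beta> + \<delta>)^2)"
    using x by (auto simp: Dset_def)
  have Q: "Qs n x \<le> 1 - (\<beta> + \<delta>)^2" using A(4) by simp
  have "(x 0)^2 \<le> (\<beta> + \<delta>)^2" using A b by (simp add: power_mono)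
  then have N: "sqrt ((x 0)^2 + Qs n x) \<le> 1" using Q by simp
  have "\<beta> * sqrt ((x 0)^2 + Qs n x) \<le> \<beta>" using N b by (simp add: mult_left_le)
  then have "\<beta> * sqrt ((x 0)^2 + Qs n x) \<le> x 0" using A(2) by linarith
  then have c: "\<beta> * sqrt (\<bar>x 0\<bar>^2 + Qs n x) \<le> \<bar>x 0\<bar>" using A(2) b by simp
  have p: "0 < \<bar>x 0\<bar>" using A(2) b by simp
  show "x \<in> Aset n e0 \<beta>" using Aset_e0_iff[OF n b(1), of x] A(1) N c p by simp
qed

lemma incl6:
  assumes n: "n \<ge> 1" and a: "0 < \<alpha>" "\<alpha> \<le> \<beta>"
  shows "Aset n e0 \<beta> \<subseteq> Aset n e0 \<alpha>"
proof
  fix x assume x: "x \<in> Aset n e0 \<beta>"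
  have b: "0 < \<beta>" using a by simp
  have "\<alpha> * sqrt (\<bar>x 0\<bar>^2 + Qs n x) \<le> \<beta> * sqrt (\<bar>x 0\<bar>^2 + Qs n x)"
    using a Qs_nonneg[of n x] by (intro mult_right_mono) auto
  then show "x \<in> Aset n e0 \<alpha>" using x Aset_e0_iff[OF n b, of x] Aset_e0_iff[OF n a(1), of x] by auto
qed

lemma fin_A:
  assumes n: "n \<ge> 1" and t: "0 < t"
  shows "Aset n e0 t \<subseteq> Dset n (-1) 1 1"
proof
  fix x assume x: "x \<in> Aset n e0 t"
  then have A: "x \<in> space (LB {..<n})" "sqrt ((x 0)^2 + Qs n x) \<le> 1" using Aset_e0_iff[OF n t] by auto
  then have s: "(x 0)^2 + Qs n x \<le> 1" by simp
  then have "(x 0)^2 \<le> 1" using Qs_nonneg[of n x] by simp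
  then have "\<bar>x 0\<bar> \<le> 1" by (simp add: abs_square_le_1)
  moreover have "Qs n x \<le> 1" using s zero_le_power2[of "x 0"] by linarith
  ultimately show "x \<in> Dset n (-1) 1 1" using A by (auto simp: Dset_def)
qed

lemma fin_F:
  assumes k: "\<kappa> \<ge> 0"
  shows "Fc n \<kappa> h \<subseteq> Dset n (-h) h (\<kappa> * h)"
proof
  fix x assume x: "x \<in> Fc n \<kappa> h"
  then have A: "x \<in> space (LB {..<n})" "\<bar>x 0\<bar> < h" "sqrt (Qs n x) \<le> \<kappa> * \<bar>x 0\<bar>" by (auto simp: Fc_def)
  have "\<kappa> * \<bar>x 0\<bar> \<le> \<kappa> * h" using A(2) k by (simp add: mult_left_mono)
  then show "x \<in> Dset n (-h) h (\<kappa> * h)" using A by (auto simp: Dset_def)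
qed

lemma pow_q_half:
  assumes "n \<ge> 1"
  shows "(1 - 1 / real n) ^ n \<le> 1/2"
proof -
  have "1 - 1 / real n \<le> exp (- (1 / real n))" using exp_ge_add_one_self[of "- (1 / real n)"] by simp
  moreover have "0 \<le> 1 - 1 / real n" using assms by simp
  ultimately have "(1 - 1 / real n) ^ n \<le> exp (- (1 / real n)) ^ n" by (rule power_mono)
  also have "\<dots> = exp (real n * (- (1 / real n)))" by (rule exp_of_nat_mult[symmetric])
  also have "\<dots> = exp (-1)" using assms by simp
  also have "\<dots> \<le> 1/2"
  proof -
    have "2 \<le> exp (1::real)" using exp_ge_add_one_self[of 1] by simp
    then show ?thesis by (simp add: exp_minus field_simps)
  qed
  finally show ?thesis .
qed

lemma exp2_ge4: "exp (2::real) \<ge> 4"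
proof -
  have "2 \<le> exp (1::real)" using exp_ge_add_one_self[of 1] by simp
  then have "2 * 2 \<le> exp (1::real) * exp 1" by (intro mult_mono) auto
  also have "exp (1::real) * exp 1 = exp 2" by (simp add: exp_add[symmetric])
  finally show ?thesis by simp
qed

lemma sigma_bound:
  assumes e: "0 < \<epsilon>" "\<epsilon> < 1" and a: "0 < \<alpha>" and b: "\<beta> = (1 + \<epsilon>) * \<alpha>" "\<beta> \<le> 1/2"
  shows "kap \<beta> / kap \<alpha> \<ge> 1 - 2 * \<epsilon>" "kap \<beta> / kap \<alpha> > 0"
proof -
  define A2 where "A2 = 1 - \<alpha>^2"
  define B2 where "B2 = 1 - \<beta>^2"
  have ab: "\<alpha> \<le> \<beta>" using b e a by simp
  have "\<beta>^2 \<le> (1/2)^2" using b a e by (intro power_mono) auto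
  then have b2: "\<beta>^2 \<le> 1/4" by (simp add: power2_eq_square)
  have a2: "\<alpha>^2 \<le> \<beta>^2" using ab a by (simp add: power_mono)
  have B2p: "B2 > 0" "B2 \<le> A2" using b2 a2 by (auto simp: A2_def B2_def)
  have A2p: "A2 \<ge> 3/4" using a2 b2 by (simp add: A2_def)
  have "sqrt B2 * sqrt A2 \<ge> B2"
  proof -
    have "sqrt B2 * sqrt B2 \<le> sqrt B2 * sqrt A2" using B2p by (intro mult_left_mono) auto
    then show ?thesis using B2p by simp
  qed
  then have "B2 * sqrt A2 \<le> (sqrt B2 * sqrt A2) * sqrt A2" using A2p by (intro mult_right_mono) auto
  also have "\<dots> = A2 * sqrt B2" using A2p by (simp add: mult.assoc mult.commute)
  finally have "B2 * sqrt A2 \<le> A2 * sqrt B2" .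
  then have r1: "sqrt B2 / sqrt A2 \<ge> B2 / A2" using A2p by (simp add: field_simps)
  have sA: "sqrt A2 > 0" using A2p by simp
  have bp: "\<beta> > 0" using a e b by simp
  have "kap \<beta> / kap \<alpha> = (sqrt B2 / \<beta>) / (sqrt A2 / \<alpha>)" by (simp add: kap_def A2_def B2_def)
  also have "\<dots> = (sqrt B2 / sqrt A2) * (\<alpha> / \<beta>)" using sA bp a by (simp add: field_simps)
  also have "\<alpha> / \<beta> = 1 / (1 + \<epsilon>)" using b(1) a e by (simp add: divide_simps)
  finally have eq: "kap \<beta> / kap \<alpha> = (sqrt B2 / sqrt A2) / (1 + \<epsilon>)" by simp
  have "B2 / A2 \<ge> (1 - 2 * \<epsilon>) * (1 + \<epsilon>)"
  proof -
    have "A2 - B2 = \<alpha>^2 * (2 * \<epsilon> + \<epsilon>^2)" by (simp add: A2_def B2_def b power_mult_distrib algebra_simps power2_eq_square)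
    also have "\<dots> \<le> \<alpha>^2 * (3 * \<epsilon>)" using e by (intro mult_left_mono) (auto simp: power2_eq_square)
    also have "\<alpha>^2 \<le> A2 / 3" using a2 b2 by (simp add: A2_def)
    finally have "A2 - B2 \<le> A2 / 3 * (3 * \<epsilon>)" using e by (simp add: mult_right_mono)
    then have "A2 - B2 \<le> A2 * \<epsilon>" by simp
    then have "B2 \<ge> A2 * (1 - \<epsilon>)" by (simp add: algebra_simps)
    moreover have "(1 - \<epsilon>) \<ge> (1 - 2 * \<epsilon>) * (1 + \<epsilon>)" using e by (simp add: algebra_simps power2_eq_square)
    moreover have "A2 * ((1 - 2 * \<epsilon>) * (1 + \<epsilon>)) \<le> A2 * (1 - \<epsilon>)"
      using \<open>(1 - \<epsilon>) \<ge> (1 - 2 * \<epsilon>) * (1 + \<epsilon>)\<close> A2p by (intro mult_left_mono) auto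
    ultimately have "B2 \<ge> A2 * ((1 - 2 * \<epsilon>) * (1 + \<epsilon>))" by linarith
    then show ?thesis using A2p by (simp add: field_simps)
  qed
  then have "sqrt B2 / sqrt A2 \<ge> (1 - 2 * \<epsilon>) * (1 + \<epsilon>)" using r1 by linarith
  moreover have "(0::real) < 1 + \<epsilon>" using e by simp
  ultimately show "kap \<beta> / kap \<alpha> \<ge> 1 - 2 * \<epsilon>" unfolding eq
    by (subst pos_le_divide_eq) auto
  show "kap \<beta> / kap \<alpha> > 0" unfolding eq using B2p A2p e by simp
qed

lemma bprime_bound:
  assumes n: "n \<ge> 1" and e: "0 < \<epsilon>" "\<epsilon> < 1" and a: "0 < \<alpha>" and b: "\<beta> = (1 + \<epsilon>) * \<alpha>" "\<beta> \<le> 1/2"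
    and na: "real n * \<alpha>^2 > 1" and ne: "real n * \<alpha>^2 * \<epsilon> \<le> 1 / (8 * exp 2)"
    and d: "\<delta> = 1 / (8 * real n * \<beta>)"
  shows "\<beta> + \<delta> \<le> 1" "0 < \<delta>" "sqrt (1 - (\<beta> + \<delta>)^2) > 0"
    "sqrt (1 - (\<beta> + \<delta>)^2) ^ (n - 1) \<ge> sqrt (1 - \<alpha>^2) ^ (n - 1) / 2"
proof -
  have bp: "\<beta> > 0" using a e b by simp
  have np: "real n > 0" using n by simp
  have ab: "\<alpha> \<le> \<beta>" using b a e by simp
  have a2: "\<alpha>^2 \<le> \<beta>^2" using ab a by (simp add: power_mono)
  have "real n * \<alpha>^2 \<le> real n * \<beta>^2" using a2 np by (intro mult_left_mono) auto
  then have nb: "real n * \<beta>^2 > 1" using na by linarith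
  have dpos: "\<delta> > 0" using d np bp by simp
  show "0 < \<delta>" by (rule dpos)
  have "\<beta>^2 \<le> (1/2)^2" using b bp by (intro power_mono) auto
  then have b2: "\<beta>^2 \<le> 1/4" by (simp add: power2_eq_square)
  have "real n * \<beta> * \<beta> > 1" using nb by (simp add: power2_eq_square mult.assoc)
  moreover have "\<beta> \<le> 1/2" by (rule b(2))
  moreover have "real n * \<beta> * \<beta> \<le> real n * \<beta> * (1/2)" using b np bp by (intro mult_left_mono) auto
  ultimately have nbb: "real n * \<beta> > 2" by linarith
  have "\<delta> \<le> 1 / 16" using d nbb by (simp add: field_simps)
  then have bd: "\<beta> + \<delta> \<le> 5/8" using b by simp
  then show "\<beta> + \<delta> \<le> 1" by simp
  have bd2: "(\<beta> + \<delta>)^2 \<le> (5/8)^2" using bd bp dpos by (intro power_mono) auto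
  then have "1 - (\<beta> + \<delta>)^2 > 0" by (simp add: power2_eq_square)
  then show bpos: "sqrt (1 - (\<beta> + \<delta>)^2) > 0" by simp
  define A2 where "A2 = 1 - \<alpha>^2"
  define R where "R = (1 - (\<beta> + \<delta>)^2) / A2"
  have A2p: "A2 \<ge> 3/4" using a2 b2 by (simp add: A2_def)
  have R0: "R \<ge> 0" using \<open>1 - (\<beta> + \<delta>)^2 > 0\<close> A2p by (simp add: R_def)
  have "\<alpha>^2 \<le> (\<beta> + \<delta>)^2" using ab a dpos by (intro power_mono) auto
  then have R1: "R \<le> 1" using A2p by (simp add: R_def A2_def)
  have key: "real n * ((\<beta> + \<delta>)^2 - \<alpha>^2) \<le> 23/64"
  proof -
    have "real n * ((\<beta> + \<delta>)^2 - \<alpha>^2) = real n * \<alpha>^2 * (2 * \<epsilon> + \<epsilon>^2) + 2 * (real n * \<beta> * \<delta>) + real n * \<delta>^2"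
      by (simp add: b power2_eq_square algebra_simps)
    also have "2 * (real n * \<beta> * \<delta>) = 1/4" using d np bp by simp
    also have "real n * \<delta>^2 = 1 / (64 * (real n * \<beta>^2))" using np bp unfolding d by (simp add: power2_eq_square field_simps)
    also have "1 / (64 * (real n * \<beta>^2)) \<le> 1/64" using nb by (simp add: field_simps)
    also have "real n * \<alpha>^2 * (2 * \<epsilon> + \<epsilon>^2) \<le> real n * \<alpha>^2 * (3 * \<epsilon>)"
      using e np by (intro mult_left_mono) (auto simp: power2_eq_square)
    also have "real n * \<alpha>^2 * (3 * \<epsilon>) = 3 * (real n * \<alpha>^2 * \<epsilon>)" by simp
    also have "\<dots> \<le> 3 * (1 / (8 * exp 2))" using ne by simp
    also have "\<dots> \<le> 3 / 32" using exp2_ge4 by (simp add: field_simps)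
    finally show ?thesis by simp
  qed
  have oneR: "1 - R = ((\<beta> + \<delta>)^2 - \<alpha>^2) / A2" using A2p by (simp add: R_def A2_def field_simps)
  have "real (n - 1) * (1 - R) \<le> real n * (1 - R)" using R1 by (intro mult_right_mono) auto
  also have "real n * (1 - R) = real n * ((\<beta> + \<delta>)^2 - \<alpha>^2) / A2" by (simp add: oneR)
  also have "\<dots> \<le> (23/64) / (3/4)"
  proof (rule frac_le)
    show "0 \<le> 23 / (64::real)" by simp
    show "real n * ((\<beta> + \<delta>)^2 - \<alpha>^2) \<le> 23/64" by (rule key)
    show "0 < (3/4::real)" by simp
    show "3/4 \<le> A2" by (rule A2p)
  qed
  finally have mR: "real (n - 1) * (1 - R) \<le> 1/2" by simp
  have "R ^ (n - 1) \<ge> 1 + real (n - 1) * (R - 1)" using Bernoulli_inequality[of "R - 1" "n - 1"] R0 by simp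
  then have Rm: "R ^ (n - 1) \<ge> 1/2" using mR by (simp add: algebra_simps)
  have sR: "sqrt R \<ge> R"
  proof -
    have "sqrt R \<le> 1" using R1 by simp
    then have "sqrt R * sqrt R \<le> sqrt R * 1" using R0 by (intro mult_left_mono) auto
    then show ?thesis using R0 by simp
  qed
  have "sqrt (1 - (\<beta> + \<delta>)^2) = sqrt R * sqrt A2" using A2p by (simp add: R_def real_sqrt_mult[symmetric])
  then have "sqrt (1 - (\<beta> + \<delta>)^2) ^ (n - 1) = sqrt R ^ (n - 1) * sqrt (1 - \<alpha>^2) ^ (n - 1)"
    by (simp add: A2_def power_mult_distrib)
  also have "\<dots> \<ge> R ^ (n - 1) * sqrt (1 - \<alpha>^2) ^ (n - 1)"
    using sR R0 A2p by (intro mult_right_mono power_mono) (auto simp: A2_def)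
  finally have "sqrt (1 - (\<beta> + \<delta>)^2) ^ (n - 1) \<ge> R ^ (n - 1) * sqrt (1 - \<alpha>^2) ^ (n - 1)" .
  moreover have "R ^ (n - 1) * sqrt (1 - \<alpha>^2) ^ (n - 1) \<ge> 1/2 * sqrt (1 - \<alpha>^2) ^ (n - 1)"
    using Rm A2p by (intro mult_right_mono) (auto simp: A2_def)
  ultimately show "sqrt (1 - (\<beta> + \<delta>)^2) ^ (n - 1) \<ge> sqrt (1 - \<alpha>^2) ^ (n - 1) / 2" by simp
qed

lemma final_arith:
  fixes K N Fa Fb Aa Ab qn sm \<alpha> \<beta> \<epsilon> \<delta> :: real
  assumes K: "K > 0" and N: "N \<ge> 1" and Fa: "Fa \<ge> 0" and F1: "Fa * (1 - qn) \<le> 2 * \<alpha> * K / N"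
    and qn: "qn \<le> 1/2" and sm: "sm \<ge> 1 - 2 * N * \<epsilon>" and Fb: "Fb = sm * Fa"
    and AA: "Aa - Ab \<le> Fa - Fb + 2 * \<epsilon> * \<alpha> * K" and Ab: "Ab \<ge> \<delta> * K / 2"
    and d: "\<delta> = 1 / (8 * N * \<beta>)" and b: "\<beta> = (1 + \<epsilon>) * \<alpha>" and e: "0 < \<epsilon>" "\<epsilon> < 1" and a: "0 < \<alpha>"
  shows "Aa \<le> (1 + 320 * N * \<alpha>^2 * \<epsilon>) * Ab"
proof -
  have "Fa * (1/2) \<le> Fa * (1 - qn)" using Fa qn by (intro mult_left_mono) auto
  then have Fa1: "Fa \<le> 4 * \<alpha> * K / N" using F1 by simp
  have "Fa - Fb = (1 - sm) * Fa" using Fb by (simp add: algebra_simps)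
  also have "\<dots> \<le> (2 * N * \<epsilon>) * Fa" using sm Fa by (intro mult_right_mono) auto
  also have "\<dots> \<le> (2 * N * \<epsilon>) * (4 * \<alpha> * K / N)" using Fa1 N e by (intro mult_left_mono) auto
  also have "\<dots> = 8 * \<epsilon> * \<alpha> * K" using N by (simp add: field_simps)
  finally have "Aa - Ab \<le> 10 * \<epsilon> * \<alpha> * K" using AA by simp
  moreover have "10 * \<epsilon> * \<alpha> * K = (160 * N * \<alpha> * \<beta> * \<epsilon>) * (\<delta> * K / 2)"
  proof -
    have bp: "\<beta> > 0" using a e b by simp
    have "\<delta> * (8 * N * \<beta>) = 1" using N bp unfolding d by simp
    moreover have "(160 * N * \<alpha> * \<beta> * \<epsilon>) * (\<delta> * K / 2) = 10 * \<epsilon> * \<alpha> * K * (\<delta> * (8 * N * \<beta>))"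
      by (simp add: algebra_simps)
    ultimately show ?thesis by (metis mult.right_neutral)
  qed
  moreover have "(160 * N * \<alpha> * \<beta> * \<epsilon>) * (\<delta> * K / 2) \<le> (160 * N * \<alpha> * \<beta> * \<epsilon>) * Ab"
    using Ab N a e b by (intro mult_left_mono) auto
  moreover have "160 * N * \<alpha> * \<beta> * \<epsilon> \<le> 320 * N * \<alpha>^2 * \<epsilon>"
  proof -
    have "160 * N * \<alpha> * \<beta> * \<epsilon> = (160 * N * \<alpha>^2 * \<epsilon>) * (1 + \<epsilon>)" by (simp add: b power2_eq_square)
    also have "\<dots> \<le> (160 * N * \<alpha>^2 * \<epsilon>) * 2" using N e a by (intro mult_left_mono) auto
    finally show ?thesis by simp
  qed
  moreover have "Ab \<ge> 0"
  proof -
    have "\<delta> > 0" using d N a e b by simp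
    then have "\<delta> * K / 2 \<ge> 0" using K by simp
    then show ?thesis using Ab by linarith
  qed
  ultimately have "Aa - Ab \<le> (320 * N * \<alpha>^2 * \<epsilon>) * Ab"
    by (smt (verit, best) mult_right_mono)
  then show ?thesis by (simp add: algebra_simps)
qed

lemma Dset_fmeas:
  assumes "n \<ge> 1" "a \<le> b" "r > 0"
  shows "Dset n a b r \<in> fmeasurable (LB {..<n})"
  using emeasure_Dset[OF assms] Dset_sets[OF assms(1)] by (intro fmeasurableI) auto

lemma measure_Dset:
  assumes "n \<ge> 1" "a \<le> b" "r > 0"
  shows "measure (LB {..<n}) (Dset n a b r) = (b - a) * unit_ball_vol (real (n - 1)) * r ^ (n - 1)"
  using emeasure_Dset[OF assms] assms by (simp add: measure_def)

lemma measure_scale: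
  assumes "emeasure M A = ennreal c * emeasure M B" "c \<ge> 0"
  shows "measure M A = c * measure M B"
  using assms by (simp add: measure_def enn2real_mult)

lemma e0_main:
  assumes n: "n \<ge> 1" and e: "0 < \<epsilon>" "\<epsilon> < 1" and a: "1 / sqrt (real n) < \<alpha>"
    and b: "\<beta> \<le> 1/2" "\<beta> = (1 + \<epsilon>) * \<alpha>" and ne: "real n * \<alpha>^2 * \<epsilon> \<le> 1 / (8 * exp 2)"
  shows "measure (LB {..<n}) (Aset n e0 \<beta>) > 0"
    "measure (LB {..<n}) (Aset n e0 \<beta>) \<le> measure (LB {..<n}) (Aset n e0 \<alpha>)"
    "measure (LB {..<n}) (Aset n e0 \<alpha>) \<le> (1 + 320 * real n * \<alpha>^2 * \<epsilon>) * measure (LB {..<n}) (Aset n e0 \<beta>)"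
proof -
  have np: "real n > 0" using n by simp
  have sn: "sqrt (real n) > 0" using np by simp
  have a0: "\<alpha> > 0" using a sn by (smt (verit) divide_pos_pos)
  have ab: "\<alpha> \<le> \<beta>" "\<alpha> < \<beta>" using b e a0 by auto
  have b1: "\<beta> < 1" using b by simp
  have bp: "\<beta> > 0" using ab a0 by simp
  have a1: "\<alpha> < 1" using ab b1 by simp
  have "(1 / sqrt (real n))^2 < \<alpha>^2" using a sn by (intro power_strict_mono) auto
  then have "1 / real n < \<alpha>^2" using np by (simp add: power_divide)
  then have na: "real n * \<alpha>^2 > 1" using np by (simp add: field_simps)
  have "\<alpha> \<le> 1/2" using ab(1) b(1) by linarith
  then have "\<alpha>^2 \<le> (1/2)^2" using a0 by (intro power_mono) auto
  then have "real n * \<alpha>^2 \<le> real n * (1/4)" using np by (intro mult_left_mono) (auto simp: power2_eq_square)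
  then have n4: "real n > 4" using na by simp
  define m where "m = n - 1"
  define \<omega> where "\<omega> = unit_ball_vol (real m)"
  have \<omega>p: "\<omega> > 0" by (simp add: \<omega>_def)
  define ra where "ra = sqrt (1 - \<alpha>^2)"
  have "\<alpha>^2 < 1" using a0 a1 by (simp add: power_less_one_iff)
  then have rap: "ra > 0" by (simp add: ra_def)
  define K where "K = \<omega> * ra ^ m"
  have Kp: "K > 0" using \<omega>p rap by (simp add: K_def)
  define q where "q = 1 - 1 / real n"
  have q: "0 < q" "q < 1" using n4 np by (auto simp: q_def)
  define \<delta> where "\<delta> = 1 / (8 * real n * \<beta>)"
  note bpb = bprime_bound[OF n e a0 b(2,1) na ne \<delta>_def]
  define rb where "rb = sqrt (1 - (\<beta> + \<delta>)^2)"
  have rbp: "rb > 0" using bpb(3) by (simp add: rb_def)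
  define \<sigma> where "\<sigma> = kap \<beta> / kap \<alpha>"
  have \<sigma>: "\<sigma> \<ge> 1 - 2 * \<epsilon>" "\<sigma> > 0" using sigma_bound[OF e a0 b(2,1)] by (auto simp: \<sigma>_def)
  have ka: "kap \<alpha> > 0" using a0 a1 \<open>\<alpha>^2 < 1\<close> by (simp add: kap_def)
  have kaa: "kap \<alpha> * \<alpha> = ra" using kap_mul[OF a0] by (simp add: ra_def)
  have D1: "Dset n (-1) 1 1 \<in> fmeasurable (LB {..<n})" by (rule Dset_fmeas) (use n in auto)
  have AaF: "Aset n e0 \<alpha> \<in> fmeasurable (LB {..<n})"
    using fmeasurableI2[OF D1 fin_A[OF n a0]] by simp
  have AbF: "Aset n e0 \<beta> \<in> fmeasurable (LB {..<n})"
    using fmeasurableI2[OF D1 fin_A[OF n bp]] by simp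
  have D2: "Dset n (-\<alpha>) \<alpha> ra \<in> fmeasurable (LB {..<n})" by (rule Dset_fmeas) (use n a0 rap in auto)
  have FaF: "Fc n (kap \<alpha>) \<alpha> \<in> fmeasurable (LB {..<n})"
    using fmeasurableI2[OF D2 _ Fc_sets[OF n]] fin_F[of "kap \<alpha>" n \<alpha>] ka kaa by simp
  have Fq_sub: "Fc n (kap \<alpha>) (q * \<alpha>) \<subseteq> Fc n (kap \<alpha>) \<alpha>"
    using q a0 by (auto simp: Fc_def) (smt (verit) mult_le_cancel_right1)
  have Fb_sub: "Fc n (kap \<beta>) \<alpha> \<subseteq> Fc n (kap \<alpha>) \<alpha>" by (rule incl3[OF a0 ab(1) b1])
  have m1: "measure (LB {..<n}) (Fc n (kap \<alpha>) (q * \<alpha>)) = q ^ n * measure (LB {..<n}) (Fc n (kap \<alpha>) \<alpha>)"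
    using Fc_full_scale[OF n q(1)] q by (intro measure_scale) auto
  have "measure (LB {..<n}) (Fc n (kap \<alpha>) \<alpha>) - measure (LB {..<n}) (Fc n (kap \<alpha>) (q * \<alpha>))
      = measure (LB {..<n}) (Fc n (kap \<alpha>) \<alpha> - Fc n (kap \<alpha>) (q * \<alpha>))"
    using FaF Fq_sub Fc_sets[OF n] by (intro measure_Diff[symmetric]) (auto simp: fmeasurable_def)
  also have "\<dots> \<le> measure (LB {..<n}) (Dset n (q * \<alpha>) \<alpha> ra \<union> Dset n (-\<alpha>) (-(q * \<alpha>)) ra)"
  proof (rule measure_mono_fmeasurable)
    show "Fc n (kap \<alpha>) \<alpha> - Fc n (kap \<alpha>) (q * \<alpha>) \<subseteq> Dset n (q * \<alpha>) \<alpha> ra \<union> Dset n (-\<alpha>) (-(q * \<alpha>)) ra"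
      using incl2[OF n a0 a1 q] by (simp add: ra_def)
    show "Fc n (kap \<alpha>) \<alpha> - Fc n (kap \<alpha>) (q * \<alpha>) \<in> sets (LB {..<n})" using Fc_sets[OF n] by simp
    have "q * \<alpha> \<le> \<alpha>" using q a0 by simp
    then show "Dset n (q * \<alpha>) \<alpha> ra \<union> Dset n (-\<alpha>) (-(q * \<alpha>)) ra \<in> fmeasurable (LB {..<n})"
      using rap by (intro fmeasurable.Un Dset_fmeas n) auto
  qed
  also have "\<dots> \<le> measure (LB {..<n}) (Dset n (q * \<alpha>) \<alpha> ra) + measure (LB {..<n}) (Dset n (-\<alpha>) (-(q * \<alpha>)) ra)"
    using Dset_sets[OF n] by (intro measure_Un_le) auto
  also have "\<dots> = 2 * ((1 - q) * \<alpha>) * K"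
  proof -
    have "q * \<alpha> \<le> \<alpha>" using q a0 by simp
    then show ?thesis using measure_Dset[OF n _ rap, of "q * \<alpha>" \<alpha>] measure_Dset[OF n _ rap, of "-\<alpha>" "-(q * \<alpha>)"]
      by (simp add: K_def \<omega>_def m_def algebra_simps)
  qed
  finally have F1: "measure (LB {..<n}) (Fc n (kap \<alpha>) \<alpha>) * (1 - q ^ n) \<le> 2 * \<alpha> * K / real n"
    using m1 np by (simp add: q_def algebra_simps)
  have kb: "kap \<beta> \<noteq> 0" using \<sigma>(2) by (auto simp: \<sigma>_def)
  have "kap \<beta> / \<sigma> = kap \<alpha>" using ka kb by (simp add: \<sigma>_def)
  then have "emeasure (LB {..<n}) (Fc n (kap \<alpha>) \<alpha>) = ennreal ((1/\<sigma>)^(n-1)) * emeasure (LB {..<n}) (Fc n (kap \<beta>) \<alpha>)"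
    using Fc_rest_scale[OF n \<sigma>(2), of "kap \<beta>" \<alpha>] by simp
  then have "measure (LB {..<n}) (Fc n (kap \<alpha>) \<alpha>) = (1/\<sigma>)^(n-1) * measure (LB {..<n}) (Fc n (kap \<beta>) \<alpha>)"
    using \<sigma>(2) by (intro measure_scale) auto
  then have Fb: "measure (LB {..<n}) (Fc n (kap \<beta>) \<alpha>) = \<sigma> ^ m * measure (LB {..<n}) (Fc n (kap \<alpha>) \<alpha>)"
    using \<sigma>(2) by (simp add: m_def power_divide field_simps)
  have sm: "\<sigma> ^ m \<ge> 1 - 2 * real n * \<epsilon>"
  proof -
    have "\<sigma> ^ m \<ge> 1 + real m * (\<sigma> - 1)" using Bernoulli_inequality[of "\<sigma> - 1" m] \<sigma>(2) by simp
    moreover have "real m * (\<sigma> - 1) \<ge> real m * (- 2 * \<epsilon>)" using \<sigma>(1) by (intro mult_left_mono) auto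
    moreover have "real m * (2 * \<epsilon>) \<le> real n * (2 * \<epsilon>)" using e by (intro mult_right_mono) (auto simp: m_def)
    ultimately show ?thesis by (simp add: algebra_simps)
  qed
  have "measure (LB {..<n}) (Aset n e0 \<alpha>) - measure (LB {..<n}) (Aset n e0 \<beta>) = measure (LB {..<n}) (Aset n e0 \<alpha> - Aset n e0 \<beta>)"
    using AaF AbF incl6[OF n a0 ab(1)] by (intro measure_Diff[symmetric]) (auto simp: fmeasurable_def)
  also have "\<dots> \<le> measure (LB {..<n}) ((Fc n (kap \<alpha>) \<alpha> - Fc n (kap \<beta>) \<alpha>) \<union> Dset n \<alpha> \<beta> ra \<union> Dset n (-\<beta>) (-\<alpha>) ra)"
  proof (rule measure_mono_fmeasurable)
    show "Aset n e0 \<alpha> - Aset n e0 \<beta> \<subseteq> (Fc n (kap \<alpha>) \<alpha> - Fc n (kap \<beta>) \<alpha>) \<union> Dset n \<alpha> \<beta> ra \<union> Dset n (-\<beta>) (-\<alpha>) ra"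
      using incl1[OF n a0 ab(1) b1] by (simp add: ra_def)
    show "Aset n e0 \<alpha> - Aset n e0 \<beta> \<in> sets (LB {..<n})" by simp
    have "Fc n (kap \<alpha>) \<alpha> - Fc n (kap \<beta>) \<alpha> \<in> fmeasurable (LB {..<n})"
      using fmeasurableI2[OF FaF, of "Fc n (kap \<alpha>) \<alpha> - Fc n (kap \<beta>) \<alpha>"] Fc_sets[OF n] by auto
    then show "(Fc n (kap \<alpha>) \<alpha> - Fc n (kap \<beta>) \<alpha>) \<union> Dset n \<alpha> \<beta> ra \<union> Dset n (-\<beta>) (-\<alpha>) ra \<in> fmeasurable (LB {..<n})"
      using rap ab by (intro fmeasurable.Un Dset_fmeas n) auto
  qed
  also have "\<dots> \<le> measure (LB {..<n}) (Fc n (kap \<alpha>) \<alpha> - Fc n (kap \<beta>) \<alpha>) + measure (LB {..<n}) (Dset n \<alpha> \<beta> ra) + measure (LB {..<n}) (Dset n (-\<beta>) (-\<alpha>) ra)"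
  proof -
    have s1: "Fc n (kap \<alpha>) \<alpha> - Fc n (kap \<beta>) \<alpha> \<in> sets (LB {..<n})" using Fc_sets[OF n] by auto
    have s2: "Dset n \<alpha> \<beta> ra \<in> sets (LB {..<n})" "Dset n (-\<beta>) (-\<alpha>) ra \<in> sets (LB {..<n})" using Dset_sets[OF n] by auto
    have "measure (LB {..<n}) ((Fc n (kap \<alpha>) \<alpha> - Fc n (kap \<beta>) \<alpha>) \<union> Dset n \<alpha> \<beta> ra \<union> Dset n (-\<beta>) (-\<alpha>) ra)
       \<le> measure (LB {..<n}) ((Fc n (kap \<alpha>) \<alpha> - Fc n (kap \<beta>) \<alpha>) \<union> Dset n \<alpha> \<beta> ra) + measure (LB {..<n}) (Dset n (-\<beta>) (-\<alpha>) ra)"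
      using s1 s2 by (intro measure_Un_le) auto
    also have "measure (LB {..<n}) ((Fc n (kap \<alpha>) \<alpha> - Fc n (kap \<beta>) \<alpha>) \<union> Dset n \<alpha> \<beta> ra)
       \<le> measure (LB {..<n}) (Fc n (kap \<alpha>) \<alpha> - Fc n (kap \<beta>) \<alpha>) + measure (LB {..<n}) (Dset n \<alpha> \<beta> ra)"
      using s1 s2 by (intro measure_Un_le) auto
    finally show ?thesis by simp
  qed
  also have "measure (LB {..<n}) (Fc n (kap \<alpha>) \<alpha> - Fc n (kap \<beta>) \<alpha>) = measure (LB {..<n}) (Fc n (kap \<alpha>) \<alpha>) - measure (LB {..<n}) (Fc n (kap \<beta>) \<alpha>)"
    using FaF Fb_sub Fc_sets[OF n] by (intro measure_Diff) (auto simp: fmeasurable_def)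
  finally have AA0: "measure (LB {..<n}) (Aset n e0 \<alpha>) - measure (LB {..<n}) (Aset n e0 \<beta>) \<le>
      measure (LB {..<n}) (Fc n (kap \<alpha>) \<alpha>) - measure (LB {..<n}) (Fc n (kap \<beta>) \<alpha>) + measure (LB {..<n}) (Dset n \<alpha> \<beta> ra) + measure (LB {..<n}) (Dset n (-\<beta>) (-\<alpha>) ra)" .
  have "measure (LB {..<n}) (Dset n \<alpha> \<beta> ra) + measure (LB {..<n}) (Dset n (-\<beta>) (-\<alpha>) ra) = 2 * \<epsilon> * \<alpha> * K"
    using measure_Dset[OF n _ rap, of \<alpha> \<beta>] measure_Dset[OF n _ rap, of "-\<beta>" "-\<alpha>"] ab b(2)
    by (simp add: K_def \<omega>_def m_def algebra_simps)
  then have AA: "measure (LB {..<n}) (Aset n e0 \<alpha>) - measure (LB {..<n}) (Aset n e0 \<beta>) \<le>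
      measure (LB {..<n}) (Fc n (kap \<alpha>) \<alpha>) - measure (LB {..<n}) (Fc n (kap \<beta>) \<alpha>) + 2 * \<epsilon> * \<alpha> * K" using AA0 by linarith
  have "measure (LB {..<n}) (Dset n \<beta> (\<beta> + \<delta>) rb) \<le> measure (LB {..<n}) (Aset n e0 \<beta>)"
    using incl5[OF n bp _ bpb(1)] bpb(2) AbF Dset_sets[OF n] by (intro measure_mono_fmeasurable) (auto simp: rb_def)
  moreover have "measure (LB {..<n}) (Dset n \<beta> (\<beta> + \<delta>) rb) = \<delta> * \<omega> * rb ^ m"
    using measure_Dset[OF n _ rbp, of \<beta> "\<beta> + \<delta>"] bpb(2) by (simp add: \<omega>_def m_def)
  moreover have "rb ^ m \<ge> ra ^ m / 2" using bpb(4) by (simp add: rb_def ra_def m_def)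
  ultimately have Ab: "measure (LB {..<n}) (Aset n e0 \<beta>) \<ge> \<delta> * K / 2"
  proof -
    assume h: "measure (LB {..<n}) (Dset n \<beta> (\<beta> + \<delta>) rb) \<le> measure (LB {..<n}) (Aset n e0 \<beta>)"
      "measure (LB {..<n}) (Dset n \<beta> (\<beta> + \<delta>) rb) = \<delta> * \<omega> * rb ^ m" "rb ^ m \<ge> ra ^ m / 2"
    have "\<delta> * K / 2 = (\<delta> * \<omega>) * (ra ^ m / 2)" by (simp add: K_def)
    also have "\<dots> \<le> (\<delta> * \<omega>) * rb ^ m" using h(3) bpb(2) \<omega>p by (intro mult_left_mono) auto
    finally show ?thesis using h(1,2) by simp
  qed
  show "measure (LB {..<n}) (Aset n e0 \<beta>) > 0"
  proof -
    have "\<delta> * K / 2 > 0" using bpb(2) Kp by simp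
    then show ?thesis using Ab by simp
  qed
  show "measure (LB {..<n}) (Aset n e0 \<beta>) \<le> measure (LB {..<n}) (Aset n e0 \<alpha>)"
    using incl6[OF n a0 ab(1)] AaF by (intro measure_mono_fmeasurable) auto
  have Fa0: "measure (LB {..<n}) (Fc n (kap \<alpha>) \<alpha>) \<ge> 0" by simp
  have qn: "q ^ n \<le> 1/2" using pow_q_half[OF n] by (simp add: q_def)
  show "measure (LB {..<n}) (Aset n e0 \<alpha>) \<le> (1 + 320 * real n * \<alpha>^2 * \<epsilon>) * measure (LB {..<n}) (Aset n e0 \<beta>)"
    using final_arith[OF Kp _ Fa0 F1 qn sm Fb AA Ab \<delta>_def b(2) e a0] n by simp
qed

lemma ball_emeasure:
  assumes n: "n \<ge> 1"
  shows "unit_ball_Rn n \<in> sets (LB {..<n})"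
    "emeasure (LB {..<n}) (unit_ball_Rn n) = ennreal (unit_ball_vol (real n))"
proof -
  have eq: "unit_ball_Rn n = {f. sqrt (\<Sum>i\<in>{..<n}. (f i)\<^sup>2) \<le> 1} \<inter> space (LB {..<n})"
    unfolding unit_ball_Rn_def lebesgue_Rn_def sph_norm_def sph_inner_def by (auto simp: power2_eq_square)
  show "unit_ball_Rn n \<in> sets (LB {..<n})"
    unfolding unit_ball_Rn_def lebesgue_Rn_def by measurable
  show "emeasure (LB {..<n}) (unit_ball_Rn n) = ennreal (unit_ball_vol (real n))"
    unfolding eq using emeasure_cball_aux[of "{..<n}" 1] by simp
qed

lemma sph_norm_nonneg: "sph_norm n x \<ge> 0"
  unfolding sph_norm_def sph_inner_def by (simp add: sum_nonneg)

lemma tail_eq: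
  assumes n: "n \<ge> 1"
  shows "sphere_tail n v t = measure (LB {..<n}) (Aset n v t) / measure (LB {..<n}) (unit_ball_Rn n)"
proof -
  define B where "B = unit_ball_Rn n"
  define \<Phi> where "\<Phi> = (\<lambda>x. restrict (\<lambda>i. x i / sph_norm n x) {..<n})"
  have Bs: "B \<in> sets (LB {..<n})" and Be: "emeasure (LB {..<n}) B = ennreal (unit_ball_vol (real n))"
    using ball_emeasure[OF n] by (auto simp: B_def)
  have Bpos: "emeasure (LB {..<n}) B \<noteq> 0" "emeasure (LB {..<n}) B \<noteq> \<infinity>"
  proof -
    have u: "unit_ball_vol (real n) > 0" by simp
    show "emeasure (LB {..<n}) B \<noteq> 0" unfolding Be ennreal_eq_0_iff using u by linarith
    show "emeasure (LB {..<n}) B \<noteq> \<infinity>" unfolding Be by simp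
  qed
  have \<Phi>m: "\<Phi> \<in> LB {..<n} \<rightarrow>\<^sub>M LB {..<n}" unfolding \<Phi>_def
    by (rule measurable_restrict) simp
  have \<Phi>m': "\<Phi> \<in> uniform_measure (LB {..<n}) B \<rightarrow>\<^sub>M LB {..<n}"
    using \<Phi>m by (simp add: measurable_cong_sets[OF sets_uniform_measure refl])
  define S where "S = {u \<in> space (LB {..<n}). t \<le> \<bar>sph_inner n v u\<bar>}"
  have Ss: "S \<in> sets (LB {..<n})" unfolding S_def by measurable
  have "sphere_tail n v t = measure (distr (uniform_measure (LB {..<n}) B) (LB {..<n}) \<Phi>) S"
    unfolding sphere_tail_def unif_sphere_def S_def B_def \<Phi>_def lebesgue_Rn_def by simp
  also have "\<dots> = measure (uniform_measure (LB {..<n}) B) (\<Phi> -` S \<inter> space (LB {..<n}))"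
    using measure_distr[OF \<Phi>m' Ss] by simp
  also have "\<dots> = measure (LB {..<n}) (B \<inter> (\<Phi> -` S \<inter> space (LB {..<n}))) / measure (LB {..<n}) B"
    using measurable_sets[OF \<Phi>m Ss] Bpos by (intro measure_uniform_measure) auto
  also have "B \<inter> (\<Phi> -` S \<inter> space (LB {..<n})) = Aset n v t"
  proof -
    have "sph_inner n v (\<Phi> x) = sph_inner n v x / sph_norm n x" for x
      unfolding sph_inner_def \<Phi>_def by (simp add: sum_divide_distrib)
    moreover have "\<Phi> x \<in> space (LB {..<n})" if "x \<in> space (LB {..<n})" for x
      using measurable_space[OF \<Phi>m that] .
    ultimately show ?thesis
      unfolding B_def unit_ball_Rn_def Aset_def S_def lebesgue_Rn_def
      by (auto simp: abs_div abs_of_nonneg[OF sph_norm_nonneg])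
  qed
  finally show ?thesis by (simp add: B_def)
qed

theorem lemmaD1:
  shows "\<exists>C::real. \<forall>(n::nat) (v::nat \<Rightarrow> real) (\<epsilon>::real) (\<alpha>::real) (\<beta>::real).
    sph_norm n v = 1 \<and> 0 < \<epsilon> \<and> \<epsilon> < 1 \<and>
    1 / sqrt (real n) < \<alpha> \<and> \<alpha> \<le> \<beta> \<and> \<beta> \<le> 1/2 \<and> \<beta> = (1 + \<epsilon>) * \<alpha> \<and>
    real n * \<alpha>^2 * \<epsilon> \<le> 1 / (8 * exp 2)
    \<longrightarrow> 1 \<le> sphere_tail n v \<alpha> / sphere_tail n v \<beta> \<and>
        sphere_tail n v \<alpha> / sphere_tail n v \<beta> \<le> 1 + C * real n * \<alpha>^2 * \<epsilon>"
proof (intro exI[of _ 320] allI impI)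
  fix n :: nat and v :: "nat \<Rightarrow> real" and \<epsilon> \<alpha> \<beta> :: real
  assume h: "sph_norm n v = 1 \<and> 0 < \<epsilon> \<and> \<epsilon> < 1 \<and>
    1 / sqrt (real n) < \<alpha> \<and> \<alpha> \<le> \<beta> \<and> \<beta> \<le> 1/2 \<and> \<beta> = (1 + \<epsilon>) * \<alpha> \<and>
    real n * \<alpha>^2 * \<epsilon> \<le> 1 / (8 * exp 2)"
  have n: "n \<ge> 1"
  proof (rule ccontr)
    assume "\<not> n \<ge> 1" then have "n = 0" by simp
    then show False using h by (simp add: sph_norm_def sph_inner_def)
  qed
  have vv: "sph_inner n v v = 1" using h by (simp add: sph_norm_def)
  have e: "0 < \<epsilon>" "\<epsilon> < 1" and a: "1 / sqrt (real n) < \<alpha>" and b: "\<beta> \<le> 1/2" "\<beta> = (1 + \<epsilon>) * \<alpha>"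
    and ne: "real n * \<alpha>^2 * \<epsilon> \<le> 1 / (8 * exp 2)" using h by auto
  note E = e0_main[OF n e a b ne]
  define Bm where "Bm = measure (LB {..<n}) (unit_ball_Rn n)"
  have Bm: "Bm > 0" using ball_emeasure(2)[OF n] by (simp add: Bm_def measure_def)
  have red: "measure (LB {..<n}) (Aset n v t) = measure (LB {..<n}) (Aset n e0 t)" for t
    using Aset_reduce[OF n vv] by (simp add: measure_def)
  define Aa where "Aa = measure (LB {..<n}) (Aset n e0 \<alpha>)"
  define Ab where "Ab = measure (LB {..<n}) (Aset n e0 \<beta>)"
  have ratio: "sphere_tail n v \<alpha> / sphere_tail n v \<beta> = Aa / Ab"
    unfolding tail_eq[OF n] red Aa_def Ab_def using Bm by (simp add: Bm_def)
  have Abp: "Ab > 0" and AbA: "Ab \<le> Aa" and up: "Aa \<le> (1 + 320 * real n * \<alpha>^2 * \<epsilon>) * Ab"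
    using E by (auto simp: Aa_def Ab_def)
  show "1 \<le> sphere_tail n v \<alpha> / sphere_tail n v \<beta> \<and>
        sphere_tail n v \<alpha> / sphere_tail n v \<beta> \<le> 1 + 320 * real n * \<alpha>^2 * \<epsilon>"
    unfolding ratio using Abp AbA up by (simp add: field_simps)
qed

end
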